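(* Consider the type with a single binary operation. For no regular variety $\mathcal{V}$ of commutative groupoids is the Mal'tsev product $\mathcal{V}\circ\mathcal{S}$ a variety. In particular neither $\mathcal{S}\circ\mathcal{S}$ nor $\mathcal{CG}\circ\mathcal{S}$ is a variety, where $\mathcal{CG}$ is the variety of commutative groupoids.
   Context: An identity is regular if exactly the same variables occur on both sides; a variety is regular if every identity it satisfies is regular. $\mathcal{S}$ is the variety of semilattices (groupoids satisfying all regular identities); it is the smallest regular variety. For a class $\mathcal{V}$ of groupoids, $\mathcal{V}\circ\mathcal{S}$ is the class of all groupoids $A$ having a congruence $\theta$ such that $A/\theta\in\mathcal{S}$ and every $\theta$-class (a subgroupoid) lies in $\mathcal{V}$. *)

theory Defs
  imports Main
begin

datatype gterm = Var nat | Op gterm gterm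

type_synonym gidentity = "gterm \<times> gterm"

fun vars :: "gterm \<Rightarrow> nat set" where
  "vars (Var i) = {i}"
| "vars (Op s t) = vars s \<union> vars t"

definition regular_identity :: "gidentity \<Rightarrow> bool" where
  "regular_identity e \<longleftrightarrow> vars (fst e) = vars (snd e)"

fun eval :: "('a \<Rightarrow> 'a \<Rightarrow> 'a) \<Rightarrow> (nat \<Rightarrow> 'a) \<Rightarrow> gterm \<Rightarrow> 'a" where
  "eval f v (Var i) = v i"
| "eval f v (Op s t) = f (eval f v s) (eval f v t)"

definition groupoid :: "'a set \<Rightarrow> ('a \<Rightarrow> 'a \<Rightarrow> 'a) \<Rightarrow> bool" where
  "groupoid A f \<longleftrightarrow> A \<noteq> {} \<and> (\<forall>x\<in>A. \<forall>y\<in>A. f x y \<in> A)"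

definition satisfies :: "'a set \<Rightarrow> ('a \<Rightarrow> 'a \<Rightarrow> 'a) \<Rightarrow> gidentity \<Rightarrow> bool" where
  "satisfies A f e \<longleftrightarrow> (\<forall>v. (\<forall>i. v i \<in> A) \<longrightarrow> eval f v (fst e) = eval f v (snd e))"

definition models :: "'a set \<Rightarrow> ('a \<Rightarrow> 'a \<Rightarrow> 'a) \<Rightarrow> gidentity set \<Rightarrow> bool" where
  "models A f \<Sigma> \<longleftrightarrow> (\<forall>e\<in>\<Sigma>. satisfies A f e)"

definition in_variety :: "gidentity set \<Rightarrow> 'a set \<Rightarrow> ('a \<Rightarrow> 'a \<Rightarrow> 'a) \<Rightarrow> bool" where
  "in_variety \<Sigma> A f \<longleftrightarrow> groupoid A f \<and> models A f \<Sigma>"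

text \<open>The identities of the variety Mod(\<Sigma>), evaluated over all groupoids whose carrier lies in
  the universe type 'a (for infinite 'a this is the usual equational theory, since relatively
  free algebras on countably many generators are countable).\<close>
definition variety_satisfies :: "'a itself \<Rightarrow> gidentity set \<Rightarrow> gidentity \<Rightarrow> bool" where
  "variety_satisfies TYPE('a) \<Sigma> e \<longleftrightarrow>
     (\<forall>(A::'a set) f. in_variety \<Sigma> A f \<longrightarrow> satisfies A f e)"

definition regular_variety :: "'a itself \<Rightarrow> gidentity set \<Rightarrow> bool" where
  "regular_variety T \<Sigma> \<longleftrightarrow> (\<forall>e. variety_satisfies T \<Sigma> e \<longrightarrow> regular_identity e)"

definition commutativity :: gidentity where
  "commutativity = (Op (Var 0) (Var 1), Op (Var 1) (Var 0))"

definition commutative_variety :: "'a itself \<Rightarrow> gidentity set \<Rightarrow> bool" where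
  "commutative_variety T \<Sigma> \<longleftrightarrow> variety_satisfies T \<Sigma> commutativity"

definition congruence :: "'a set \<Rightarrow> ('a \<Rightarrow> 'a \<Rightarrow> 'a) \<Rightarrow> ('a \<times> 'a) set \<Rightarrow> bool" where
  "congruence A f \<theta> \<longleftrightarrow> equiv A \<theta> \<and>
     (\<forall>a b c d. (a, b) \<in> \<theta> \<longrightarrow> (c, d) \<in> \<theta> \<longrightarrow> (f a c, f b d) \<in> \<theta>)"

definition quot_op :: "('a \<Rightarrow> 'a \<Rightarrow> 'a) \<Rightarrow> ('a \<times> 'a) set \<Rightarrow> 'a set \<Rightarrow> 'a set \<Rightarrow> 'a set" where
  "quot_op f \<theta> X Y = \<theta> `` {f (SOME x. x \<in> X) (SOME y. y \<in> Y)}"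

definition semilattice_groupoid :: "'b set \<Rightarrow> ('b \<Rightarrow> 'b \<Rightarrow> 'b) \<Rightarrow> bool" where
  "semilattice_groupoid A f \<longleftrightarrow> in_variety {e. regular_identity e} A f"

definition in_maltsev_S :: "gidentity set \<Rightarrow> 'a set \<Rightarrow> ('a \<Rightarrow> 'a \<Rightarrow> 'a) \<Rightarrow> bool" where
  "in_maltsev_S \<Sigma> A f \<longleftrightarrow> groupoid A f \<and>
     (\<exists>\<theta>. congruence A f \<theta> \<and>
          semilattice_groupoid (A // \<theta>) (quot_op f \<theta>) \<and>
          (\<forall>a\<in>A. in_variety \<Sigma> (\<theta> `` {a}) f))"

definition is_variety :: "'a itself \<Rightarrow> ('a set \<Rightarrow> ('a \<Rightarrow> 'a \<Rightarrow> 'a) \<Rightarrow> bool) \<Rightarrow> bool" where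
  "is_variety T K \<longleftrightarrow> (\<exists>\<Sigma>'. \<forall>(A::'a set) f. K A f \<longleftrightarrow> in_variety \<Sigma>' A f)"

end

theory Submission
  imports Defs
begin


lemma eval_in:
  fixes v :: "nat \<Rightarrow> 'a"
  assumes "\<forall>a\<in>A. \<forall>b\<in>A. f a b \<in> A" "\<forall>i. v i \<in> A"
  shows "eval f v t \<in> A"
  using assms by (induction t) auto

lemma sl_regular:
  assumes cl: "\<forall>a\<in>A. \<forall>b\<in>A. f a b \<in> A"
    and cm: "\<forall>a\<in>A. \<forall>b\<in>A. f a b = f b a"
    and as: "\<forall>a\<in>A. \<forall>b\<in>A. \<forall>c\<in>A. f (f a b) c = f a (f b c)"
    and id: "\<forall>a\<in>A. f a a = a"
    and r: "regular_identity e"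
  shows "satisfies A f e"
  unfolding satisfies_def
proof (intro allI impI)
  fix v :: "nat \<Rightarrow> 'a" assume v: "\<forall>i. v i \<in> A"
  have R2: "i \<in> vars t \<Longrightarrow> f (eval f v t) (v i) = eval f v t" for i t
  proof (induction t)
    case (Var j) then show ?case using id v by simp
  next
    case (Op s u)
    have es: "eval f v s \<in> A" and eu: "eval f v u \<in> A"
      using eval_in[OF cl v] by auto
    have vi: "v i \<in> A" using v by auto
    show ?case
    proof (cases "i \<in> vars s")
      case True
      have "f (f (eval f v s) (eval f v u)) (v i) = f (f (eval f v u) (eval f v s)) (v i)"
        using cm es eu by simp
      also have "\<dots> = f (eval f v u) (f (eval f v s) (v i))" using as es eu vi by simp
      also have "\<dots> = f (eval f v u) (eval f v s)" using Op.IH(1)[OF True] by simp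
      also have "\<dots> = f (eval f v s) (eval f v u)" using cm es eu by simp
      finally show ?thesis by simp
    next
      case False
      then have iu: "i \<in> vars u" using Op.prems by simp
      have "f (f (eval f v s) (eval f v u)) (v i) = f (eval f v s) (f (eval f v u) (v i))"
        using as es eu vi by simp
      also have "\<dots> = f (eval f v s) (eval f v u)" using Op.IH(2)[OF iu] by simp
      finally show ?thesis by simp
    qed
  qed
  have R3: "x \<in> A \<Longrightarrow> (\<forall>i\<in>vars t. f x (v i) = x) \<Longrightarrow> f x (eval f v t) = x" for x t
  proof (induction t)
    case (Var j) then show ?case by simp
  next
    case (Op s u)
    have es: "eval f v s \<in> A" and eu: "eval f v u \<in> A"
      using eval_in[OF cl v] by auto
    have "f x (eval f v (Op s u)) = f (f x (eval f v s)) (eval f v u)"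
      using as es eu Op.prems(1) by simp
    also have "\<dots> = x" using Op by simp
    finally show ?case .
  qed
  obtain s t where e: "e = (s, t)" by (cases e)
  have vst: "vars s = vars t" using r e by (simp add: regular_identity_def)
  have es: "eval f v s \<in> A" and et: "eval f v t \<in> A"
    using eval_in[OF cl v] by auto
  have 1: "f (eval f v s) (eval f v t) = eval f v s"
    using R3[OF es] R2[of _ s] vst by simp
  have 2: "f (eval f v t) (eval f v s) = eval f v t"
    using R3[OF et] R2[of _ t] vst by simp
  show "eval f v (fst e) = eval f v (snd e)" using 1 2 cm es et e by simp
qed

lemma Sigma_regular:
  assumes "regular_variety TYPE('a) \<Sigma>" "e \<in> \<Sigma>"
  shows "regular_identity e"
proof -
  have "variety_satisfies TYPE('a) \<Sigma> e"
    unfolding variety_satisfies_def in_variety_def models_def using assms(2) by blast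
  then show ?thesis using assms(1) unfolding regular_variety_def by blast
qed

lemma G:
  fixes A :: "'a set" and c :: "'a \<Rightarrow> 'c"
  assumes gr: "groupoid A f"
    and hom: "\<forall>a\<in>A. \<forall>b\<in>A. c (f a b) = m (c a) (c b)"
    and mc: "\<forall>x y. m x y = m y x"
    and ma: "\<forall>x y z. m (m x y) z = m x (m y z)"
    and mi: "\<forall>x. m x x = x"
    and cls: "\<forall>a\<in>A. in_variety \<Sigma> {b\<in>A. c b = c a} f"
  shows "in_maltsev_S \<Sigma> A f"
proof -
  define \<theta> where "\<theta> = {(a, b). a \<in> A \<and> b \<in> A \<and> c a = c b}"
  have cl: "\<And>a b. a \<in> A \<Longrightarrow> b \<in> A \<Longrightarrow> f a b \<in> A" using gr by (simp add: groupoid_def)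
  have hm: "\<And>a b. a \<in> A \<Longrightarrow> b \<in> A \<Longrightarrow> c (f a b) = m (c a) (c b)" using hom by blast
  have mem: "(a, b) \<in> \<theta> \<longleftrightarrow> a \<in> A \<and> b \<in> A \<and> c a = c b" for a b by (simp add: \<theta>_def)
  have eq: "equiv A \<theta>" unfolding equiv_def refl_on_def sym_def trans_def
    by (auto simp: \<theta>_def)
  have cong: "congruence A f \<theta>"
    unfolding congruence_def
  proof (intro conjI eq allI impI)
    fix a b d e assume "(a, b) \<in> \<theta>" "(d, e) \<in> \<theta>"
    then have "a \<in> A" "b \<in> A" "d \<in> A" "e \<in> A" "c a = c b" "c d = c e" by (simp_all add: mem)
    then show "(f a d, f b e) \<in> \<theta>" by (simp add: mem cl hm)
  qed
  have img: "\<theta> `` {a} = {b\<in>A. c b = c a}" if "a \<in> A" for a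
    using that by (auto simp: mem)
  have ceq: "\<theta> `` {a} = \<theta> `` {b}" if "a \<in> A" "b \<in> A" "c a = c b" for a b
    using that by (simp add: img)
  have Q: "quot_op f \<theta> (\<theta> `` {a}) (\<theta> `` {b}) = \<theta> `` {f a b}" if ab: "a \<in> A" "b \<in> A" for a b
  proof -
    define a' where "a' = (SOME x. x \<in> \<theta> `` {a})"
    define b' where "b' = (SOME x. x \<in> \<theta> `` {b})"
    have aa: "a \<in> \<theta> `` {a}" and bb: "b \<in> \<theta> `` {b}" using ab by (simp_all add: mem)
    have "a' \<in> \<theta> `` {a}" unfolding a'_def using aa by (rule someI)
    moreover have "b' \<in> \<theta> `` {b}" unfolding b'_def using bb by (rule someI)
    ultimately have a': "a' \<in> A" "c a' = c a" and b': "b' \<in> A" "c b' = c b" by (simp_all add: mem)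
    have "c (f a' b') = c (f a b)" using a' b' ab by (simp add: hm)
    then have "\<theta> `` {f a' b'} = \<theta> `` {f a b}" using a' b' ab by (intro ceq cl) 
    then show ?thesis unfolding quot_op_def a'_def[symmetric] b'_def[symmetric] .
  qed
  let ?Q = "A // \<theta>" and ?q = "quot_op f \<theta>"
  have qE: "\<And>X. X \<in> ?Q \<Longrightarrow> \<exists>a\<in>A. X = \<theta> `` {a}" by (auto simp: quotient_def)
  have qcl: "\<forall>X\<in>?Q. \<forall>Y\<in>?Q. ?q X Y \<in> ?Q"
  proof (intro ballI)
    fix X Y assume "X \<in> ?Q" "Y \<in> ?Q"
    then obtain a b where ab: "a \<in> A" "b \<in> A" "X = \<theta> `` {a}" "Y = \<theta> `` {b}" using qE by blast
    then have "?q X Y = \<theta> `` {f a b}" using Q by simp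
    then show "?q X Y \<in> ?Q" using cl[OF ab(1,2)] by (simp add: quotientI)
  qed
  have qcm: "\<forall>X\<in>?Q. \<forall>Y\<in>?Q. ?q X Y = ?q Y X"
  proof (intro ballI)
    fix X Y assume "X \<in> ?Q" "Y \<in> ?Q"
    then obtain a b where ab: "a \<in> A" "b \<in> A" "X = \<theta> `` {a}" "Y = \<theta> `` {b}" using qE by blast
    have 1: "?q X Y = \<theta> `` {f a b}" using Q ab by simp
    have 2: "?q Y X = \<theta> `` {f b a}" using Q ab by simp
    have "c (f a b) = c (f b a)" using ab hm mc by simp
    then have "\<theta> `` {f a b} = \<theta> `` {f b a}" using ab by (intro ceq cl)
    then show "?q X Y = ?q Y X" using 1 2 by simp
  qed
  have qas: "\<forall>X\<in>?Q. \<forall>Y\<in>?Q. \<forall>Z\<in>?Q. ?q (?q X Y) Z = ?q X (?q Y Z)"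
  proof (intro ballI)
    fix X Y Z assume "X \<in> ?Q" "Y \<in> ?Q" "Z \<in> ?Q"
    then obtain a b d where ab: "a \<in> A" "b \<in> A" "d \<in> A" "X = \<theta> `` {a}" "Y = \<theta> `` {b}" "Z = \<theta> `` {d}"
      using qE by metis
    have fab: "f a b \<in> A" and fbd: "f b d \<in> A" using ab cl by auto
    have 1: "?q (?q X Y) Z = \<theta> `` {f (f a b) d}" using Q ab fab by simp
    have 2: "?q X (?q Y Z) = \<theta> `` {f a (f b d)}" using Q ab fbd by simp
    have "c (f (f a b) d) = c (f a (f b d))" using ab fab fbd hm ma by simp
    then have "\<theta> `` {f (f a b) d} = \<theta> `` {f a (f b d)}" using ab fab fbd by (intro ceq cl)
    then show "?q (?q X Y) Z = ?q X (?q Y Z)" using 1 2 by simp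
  qed
  have qid: "\<forall>X\<in>?Q. ?q X X = X"
  proof
    fix X assume "X \<in> ?Q"
    then obtain a where ab: "a \<in> A" "X = \<theta> `` {a}" using qE by blast
    have 1: "?q X X = \<theta> `` {f a a}" using Q ab by simp
    have "c (f a a) = c a" using ab hm mi by simp
    then have "\<theta> `` {f a a} = \<theta> `` {a}" using ab by (intro ceq cl)
    then show "?q X X = X" using 1 ab by simp
  qed
  have "A \<noteq> {}" using gr by (simp add: groupoid_def)
  then have ne: "?Q \<noteq> {}" by (simp add: quotient_def)
  have "\<forall>e\<in>{e. regular_identity e}. satisfies ?Q ?q e"
    using sl_regular[OF qcl qcm qas qid] by blast
  then have sl: "semilattice_groupoid ?Q ?q"
    unfolding semilattice_groupoid_def in_variety_def groupoid_def models_def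
    using qcl ne by blast
  have cls': "\<forall>a\<in>A. in_variety \<Sigma> (\<theta> `` {a}) f" using cls img by simp
  show ?thesis unfolding in_maltsev_S_def using gr cong sl cls' by blast
qed

lemma H:
  assumes V: "in_variety \<Sigma>' A f" and gB: "groupoid B g" and im: "h ` A = B"
    and hom: "\<forall>a\<in>A. \<forall>b\<in>A. h (f a b) = g (h a) (h b)"
  shows "in_variety \<Sigma>' B g"
proof -
  have cl: "\<forall>a\<in>A. \<forall>b\<in>A. f a b \<in> A" using V by (simp add: in_variety_def groupoid_def)
  have hm: "\<And>a b. a \<in> A \<Longrightarrow> b \<in> A \<Longrightarrow> h (f a b) = g (h a) (h b)" using hom by blast
  have sat: "satisfies A f e" if "e \<in> \<Sigma>'" for e
    using V that unfolding in_variety_def models_def by blast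
  have "satisfies B g e" if e: "e \<in> \<Sigma>'" for e
    unfolding satisfies_def
  proof (intro allI impI)
    fix v :: "nat \<Rightarrow> _" assume v: "\<forall>i. v i \<in> B"
    define w where "w i = (SOME a. a \<in> A \<and> h a = v i)" for i
    have w: "w i \<in> A \<and> h (w i) = v i" for i
    proof -
      have "v i \<in> h ` A" using v im by blast
      then obtain a where "a \<in> A" "v i = h a" by (rule imageE)
      then have "\<exists>a. a \<in> A \<and> h a = v i" by (intro exI[of _ a]) simp
      then show ?thesis unfolding w_def by (rule someI_ex)
    qed
    have wA: "\<forall>i. w i \<in> A" using w by blast
    have ev: "eval g v t = h (eval f w t)" for t
    proof (induction t)
      case (Var i) then show ?case using w by simp
    next
      case (Op s u)
      have "eval f w s \<in> A" "eval f w u \<in> A" using eval_in[OF cl wA] by blast+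
      then have "h (eval f w (Op s u)) = g (h (eval f w s)) (h (eval f w u))"
        by (simp only: eval.simps hm)
      then show ?case using Op.IH by simp
    qed
    have "eval f w (fst e) = eval f w (snd e)"
      using sat[OF e] wA unfolding satisfies_def by blast
    then show "eval g v (fst e) = eval g v (snd e)" by (simp only: ev)
  qed
  then show ?thesis using gB by (simp add: in_variety_def models_def)
qed

lemma N:
  fixes B :: "'a set"
  assumes M: "in_maltsev_S \<Sigma> B g" and C: "commutative_variety TYPE('a) \<Sigma>"
    and xyz: "x \<in> B" "y \<in> B" "z \<in> B" and e: "g x y = g x z"
  shows "g (g y x) (g z x) = g (g z x) (g y x)"
proof -
  obtain \<psi> where cong: "congruence B g \<psi>" and sl: "semilattice_groupoid (B // \<psi>) (quot_op g \<psi>)"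
    and cls: "\<forall>a\<in>B. in_variety \<Sigma> (\<psi> `` {a}) g"
    using M unfolding in_maltsev_S_def by blast
  have eq: "equiv B \<psi>" and cc: "\<And>a b c d. (a, b) \<in> \<psi> \<Longrightarrow> (c, d) \<in> \<psi> \<Longrightarrow> (g a c, g b d) \<in> \<psi>"
    using cong unfolding congruence_def by auto
  have cl: "\<forall>a\<in>B. \<forall>b\<in>B. g a b \<in> B" using M by (simp add: in_maltsev_S_def groupoid_def)
  have Q: "quot_op g \<psi> (\<psi> `` {a}) (\<psi> `` {b}) = \<psi> `` {g a b}" if "a \<in> B" "b \<in> B" for a b
  proof -
    define a' where "a' = (SOME x. x \<in> \<psi> `` {a})"
    define b' where "b' = (SOME x. x \<in> \<psi> `` {b})"
    have "a \<in> \<psi> `` {a}" "b \<in> \<psi> `` {b}" using that eq by (auto simp: equiv_def refl_on_def)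
    then have "a' \<in> \<psi> `` {a}" "b' \<in> \<psi> `` {b}" unfolding a'_def b'_def by (metis someI)+
    then have "(a, a') \<in> \<psi>" "(b, b') \<in> \<psi>" by auto
    then have "(g a b, g a' b') \<in> \<psi>" using cc by blast
    then have "\<psi> `` {g a' b'} = \<psi> `` {g a b}" using eq by (metis equiv_class_eq_iff equiv_class_eq)
    then show ?thesis unfolding quot_op_def a'_def[symmetric] b'_def[symmetric] by simp
  qed
  have comm_reg: "regular_identity commutativity"
    by (auto simp: regular_identity_def commutativity_def)
  have qsat: "satisfies (B // \<psi>) (quot_op g \<psi>) commutativity"
    using sl comm_reg unfolding semilattice_groupoid_def in_variety_def models_def by blast
  have qc: "quot_op g \<psi> (\<psi> `` {a}) (\<psi> `` {b}) = quot_op g \<psi> (\<psi> `` {b}) (\<psi> `` {a})"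
    if "a \<in> B" "b \<in> B" for a b
  proof -
    let ?v = "\<lambda>i::nat. if i = 0 then \<psi> `` {a} else \<psi> `` {b}"
    have "\<forall>i. ?v i \<in> B // \<psi>" using that by (simp add: quotientI)
    then have "eval (quot_op g \<psi>) ?v (fst commutativity) = eval (quot_op g \<psi>) ?v (snd commutativity)"
      using qsat[unfolded satisfies_def, THEN spec[of _ ?v]] by blast
    then show ?thesis by (simp add: commutativity_def)
  qed
  have "\<psi> `` {g y x} = \<psi> `` {g x y}" using Q qc xyz by metis
  also have "\<dots> = \<psi> `` {g x z}" using e by simp
  also have "\<dots> = \<psi> `` {g z x}" using Q qc xyz by metis
  finally have k: "\<psi> `` {g y x} = \<psi> `` {g z x}" .
  have yx: "g y x \<in> B" and zx: "g z x \<in> B" using cl xyz by auto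
  have m1: "g y x \<in> \<psi> `` {g y x}" using yx eq by (auto simp: equiv_def refl_on_def)
  have m2: "g z x \<in> \<psi> `` {g y x}" using k zx eq by (auto simp: equiv_def refl_on_def)
  have "variety_satisfies TYPE('a) \<Sigma> commutativity" using C by (simp add: commutative_variety_def)
  then have "satisfies (\<psi> `` {g y x}) g commutativity"
    using cls yx unfolding variety_satisfies_def by blast
  moreover let ?v = "\<lambda>i::nat. if i = 0 then g y x else g z x"
  have "\<forall>i. ?v i \<in> \<psi> `` {g y x}" using m1 m2 by simp
  ultimately have "eval g ?v (fst commutativity) = eval g ?v (snd commutativity)"
    unfolding satisfies_def by (elim allE[of _ ?v]) blast
  then show ?thesis by (simp add: commutativity_def)
qed



datatype el = Ex | Ey | Ez | P1 | Q1 | O1 | P2 | R2 | O2 | P0 | S0 | T0 | O0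
datatype cl = CX | CY | CZ | CU | CW | C0

fun cls :: "el \<Rightarrow> cl" where
  "cls Ex = CX" | "cls Ey = CY" | "cls Ez = CZ"
| "cls P1 = CU" | "cls Q1 = CU" | "cls O1 = CU"
| "cls P2 = CW" | "cls R2 = CW" | "cls O2 = CW"
| "cls P0 = C0" | "cls S0 = C0" | "cls T0 = C0" | "cls O0 = C0"

fun meet :: "cl \<Rightarrow> cl \<Rightarrow> cl" where
  "meet CX CX = CX"
| "meet CX CY = CU"
| "meet CX CZ = CW"
| "meet CX CU = CU"
| "meet CX CW = CW"
| "meet CX C0 = C0"
| "meet CY CX = CU"
| "meet CY CY = CY"
| "meet CY CZ = C0"
| "meet CY CU = CU"
| "meet CY CW = C0"
| "meet CY C0 = C0"
| "meet CZ CX = CW"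
| "meet CZ CY = C0"
| "meet CZ CZ = CZ"
| "meet CZ CU = C0"
| "meet CZ CW = CW"
| "meet CZ C0 = C0"
| "meet CU CX = CU"
| "meet CU CY = CU"
| "meet CU CZ = C0"
| "meet CU CU = CU"
| "meet CU CW = C0"
| "meet CU C0 = C0"
| "meet CW CX = CW"
| "meet CW CY = C0"
| "meet CW CZ = CW"
| "meet CW CU = C0"
| "meet CW CW = CW"
| "meet CW C0 = C0"
| "meet C0 CX = C0"
| "meet C0 CY = C0"
| "meet C0 CZ = C0"
| "meet C0 CU = C0"
| "meet C0 CW = C0"
| "meet C0 C0 = C0"

fun bot :: "cl \<Rightarrow> el" where
  "bot CU = O1" | "bot CW = O2" | "bot _ = O0"

definition mulA :: "el \<Rightarrow> el \<Rightarrow> el" where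
  "mulA a b = (if a = b then a
     else if (a, b) = (Ex, Ey) then P1 else if (a, b) = (Ey, Ex) then Q1
     else if (a, b) = (Ex, Ez) then P2 else if (a, b) = (Ez, Ex) then R2
     else if (a, b) = (Q1, R2) then S0 else if (a, b) = (R2, Q1) then T0
     else if a \<in> {P1, P2, P0} \<and> b \<in> {P1, P2, P0} then P0
     else bot (meet (cls a) (cls b)))"

fun hh :: "el \<Rightarrow> el" where
  "hh P1 = P0" | "hh P2 = P0" | "hh O1 = O0" | "hh O2 = O0" | "hh x = x"

lemma meet_comm: "meet a b = meet b a"
  by (cases a; cases b; simp)
lemma meet_assoc: "meet (meet a b) c = meet a (meet b c)"
  by (cases a; cases b; cases c; simp)
lemma meet_idem: "meet a a = a"
  by (cases a) simp_all

lemma cls_mul: "cls (mulA a b) = meet (cls a) (cls b)"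
  by (cases a; cases b; simp add: mulA_def)

lemma mul_comm: "cls a = cls b \<Longrightarrow> mulA a b = mulA b a"
  by (cases a; cases b; simp add: mulA_def)

lemma mul_flat: "cls a = cls b \<Longrightarrow> mulA a b = (if a = b then a else bot (cls a))"
  by (cases a; cases b; simp add: mulA_def)

lemma bot_cls: "cls a = cls b \<Longrightarrow> a \<noteq> b \<Longrightarrow> cls (bot (cls a)) = cls a"
  by (cases a; cases b; simp)

lemma mul_assoc: "cls a = cls b \<Longrightarrow> cls b = cls c \<Longrightarrow> mulA (mulA a b) c = mulA a (mulA b c)"
proof -
  assume ab: "cls a = cls b" and bc: "cls b = cls c"
  show ?thesis
  proof (cases "a = b")
    case True
    then show ?thesis using ab bc mul_flat by (smt (verit) bot_cls)
  next
    case False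
    note o = bot_cls[OF ab False]
    show ?thesis using ab bc mul_flat o False by (smt (verit))
  qed
qed

lemma hh_hom: "hh (mulA a b) = hh (mulA (hh a) (hh b))"
  by (cases a; cases b; simp add: mulA_def)

lemma fin_el: "finite (UNIV :: el set)"
proof -
  have "UNIV = {Ex, Ey, Ez, P1, Q1, O1, P2, R2, O2, P0, S0, T0, O0}"
    by (auto intro: el.exhaust)
  then show ?thesis by (metis finite.emptyI finite_insert)
qed

lemma emb:
  assumes "infinite (UNIV :: 'a set)"
  shows "\<exists>\<iota> :: el \<Rightarrow> 'a. inj \<iota>"
proof -
  obtain S :: "'a set" where S: "finite S" "card S = card (UNIV :: el set)"
    using infinite_arbitrarily_large[OF assms] by blast
  then obtain f :: "el \<Rightarrow> 'a" where "f ` UNIV \<subseteq> S" "inj_on f UNIV"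
    using card_le_inj[OF fin_el S(1)] by auto
  then show ?thesis by blast
qed

theorem corollary4p16:
  fixes \<Sigma> :: "gidentity set"
  assumes "infinite (UNIV :: 'a set)"
    and "regular_variety TYPE('a) \<Sigma>"
    and "commutative_variety TYPE('a) \<Sigma>"
  shows "\<not> is_variety TYPE('a) (in_maltsev_S \<Sigma>)"
proof
  assume "is_variety TYPE('a) (in_maltsev_S \<Sigma>)"
  then obtain \<Sigma>' where K: "\<And>(A::'a set) f. in_maltsev_S \<Sigma> A f \<longleftrightarrow> in_variety \<Sigma>' A f"
    unfolding is_variety_def by blast
  obtain \<iota> :: "el \<Rightarrow> 'a" where inj: "inj \<iota>" using emb[OF assms(1)] by blast
  have ii: "inv \<iota> (\<iota> a) = a" for a using inj by simp
  define A where "A = range \<iota>"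
  define f where "f u w = \<iota> (mulA (inv \<iota> u) (inv \<iota> w))" for u w
  define B where "B = \<iota> ` range hh"
  define g where "g u w = \<iota> (hh (mulA (inv \<iota> u) (inv \<iota> w)))" for u w
  define c where "c u = cls (inv \<iota> u)" for u
  have fi: "f (\<iota> a) (\<iota> b) = \<iota> (mulA a b)" for a b by (simp add: f_def ii)
  have gi: "g (\<iota> a) (\<iota> b) = \<iota> (hh (mulA a b))" for a b by (simp add: g_def ii)
  have ci: "c (\<iota> a) = cls a" for a by (simp add: c_def ii)
  have grA: "groupoid A f" by (auto simp: groupoid_def A_def fi)
  have homc: "\<forall>a\<in>A. \<forall>b\<in>A. c (f a b) = meet (cls (inv \<iota> a)) (cls (inv \<iota> b))"
    by (auto simp: A_def fi ci cls_mul ii)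
  have reg: "\<forall>e\<in>\<Sigma>. regular_identity e" using Sigma_regular[OF assms(2)] by blast
  have clsV: "\<forall>a\<in>A. in_variety \<Sigma> {b\<in>A. c b = c a} f"
  proof
    fix a0 assume "a0 \<in> A"
    then obtain a where a: "a0 = \<iota> a" by (auto simp: A_def)
    let ?C = "{b\<in>A. c b = c a0}"
    have Ceq: "?C = \<iota> ` {b. cls b = cls a}" by (auto simp: A_def a ci)
    have ccl: "\<forall>u\<in>?C. \<forall>w\<in>?C. f u w \<in> ?C"
      unfolding Ceq by (auto simp: fi cls_mul meet_idem)
    have ccm: "\<forall>u\<in>?C. \<forall>w\<in>?C. f u w = f w u"
      unfolding Ceq by (auto simp: fi) (metis mul_comm)
    have cas: "\<forall>u\<in>?C. \<forall>w\<in>?C. \<forall>v\<in>?C. f (f u w) v = f u (f w v)"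
      unfolding Ceq by (auto simp: fi cls_mul meet_idem) (metis mul_assoc)
    have cid: "\<forall>u\<in>?C. f u u = u"
      unfolding Ceq by (auto simp: fi mulA_def)
    have "?C \<noteq> {}" using Ceq by blast
    then show "in_variety \<Sigma> ?C f"
      unfolding in_variety_def groupoid_def models_def
      using ccl sl_regular[OF ccl ccm cas cid] reg by blast
  qed
  have "in_maltsev_S \<Sigma> A f"
  proof (rule G[where c=c and m=meet, OF grA _ _ _ _ clsV])
    show "\<forall>a\<in>A. \<forall>b\<in>A. c (f a b) = meet (c a) (c b)" using homc by (simp add: c_def)
    show "\<forall>x y. meet x y = meet y x" using meet_comm by blast
    show "\<forall>x y z. meet (meet x y) z = meet x (meet y z)" using meet_assoc by blast
    show "\<forall>x. meet x x = x" using meet_idem by blast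
  qed
  then have VA: "in_variety \<Sigma>' A f" using K by blast
  define hm where "hm u = \<iota> (hh (inv \<iota> u))" for u
  have grB: "groupoid B g"
  proof -
    have "g (\<iota> (hh a)) (\<iota> (hh b)) \<in> B" for a b by (simp add: gi B_def)
    then show ?thesis by (auto simp: groupoid_def B_def)
  qed
  have "hm ` A = (\<lambda>x. hm (\<iota> x)) ` UNIV" by (simp add: A_def image_image)
  also have "\<dots> = (\<lambda>x. \<iota> (hh x)) ` UNIV" by (simp add: hm_def ii)
  also have "\<dots> = B" by (simp add: B_def image_image)
  finally have im: "hm ` A = B" .
  have hom: "\<forall>a\<in>A. \<forall>b\<in>A. hm (f a b) = g (hm a) (hm b)"
    by (auto simp: A_def hm_def fi gi ii hh_hom[symmetric])
  have "in_variety \<Sigma>' B g" by (rule H[OF VA grB im hom])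
  then have MB: "in_maltsev_S \<Sigma> B g" using K by blast
  have xB: "\<iota> Ex \<in> B" "\<iota> Ey \<in> B" "\<iota> Ez \<in> B"
    by (auto simp: B_def image_iff intro: exI[of _ Ex] exI[of _ Ey] exI[of _ Ez])
  have e: "g (\<iota> Ex) (\<iota> Ey) = g (\<iota> Ex) (\<iota> Ez)" by (simp add: gi mulA_def)
  have "g (g (\<iota> Ey) (\<iota> Ex)) (g (\<iota> Ez) (\<iota> Ex)) = g (g (\<iota> Ez) (\<iota> Ex)) (g (\<iota> Ey) (\<iota> Ex))"
    by (rule N[OF MB assms(3) xB e])
  then have "\<iota> S0 = \<iota> T0" by (simp add: gi mulA_def)
  then show False using inj by (simp add: inj_eq)
qed

end
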